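(* Let $(N^\circ,M^\circ,L^\circ)\in OLag(V)^3$ be a triple of oriented Lagrangians which are pairwise in general position (i.e. $N+M=M+L=N+L=V$). Then $$T_{N^\circ,L^\circ}=T_{N^\circ,M^\circ}\circ T_{M^\circ,L^\circ}$$ as maps $\mathcal H_{L^\circ}\to\mathcal H_{N^\circ}$.
   Context: Let $p$ be an odd prime, $q$ a power of $p$, and $(V,\omega)$ a symplectic vector space of dimension $2n$ over $\mathbb F_q$. The Heisenberg group $H(V)$ is the set $V\times\mathbb F_q$ with multiplication $(v,z)\cdot(v',z')=(v+v',z+z'+\tfrac12\omega(v,v'))$; its center is $Z=\{(0,z):z\in\mathbb F_q\}$. Fix a non-trivial character $\psi:\mathbb F_q\to\mathbb C^\times$. An isotropic subspace $I\subset V$ is regarded as the subgroup $\{(i,0):i\in I\}$ of $H(V)$. An oriented Lagrangian is a pair $L^\circ=(L,o_L)$ with $L\subset V$ a Lagrangian subspace and $o_L\in\bigwedge^nL$ nonzero; $OLag(V)$ denotes the set of oriented Lagrangians. For $L^\circ\in OLag(V)$, $\mathcal H_{L^\circ}$ is the space of functions $f:H(V)\to\mathbb C$ with $f((0,z)\cdot(l,0)\cdot h)=\psi(z)f(h)$ for all $z\in\mathbb F_q$, $l\in L$, $h\in H(V)$, on which $H(V)$ acts by right translation $(\pi_{L^\circ}(h)f)(h')=f(h'h)$. For a $2k$-dimensional symplectic space $(W,\omega)$ and Lagrangians $A,B\subset W$, define $\omega_\wedge:\bigwedge^kA\times\bigwedge^kB\to\mathbb F_q$ by $\omega_\wedge(a_1\wedge\dots\wedge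 a_k,\,b_1\wedge\dots\wedge b_k)=(-1)^{k(k-1)/2}\det\big(\omega(a_i,b_j)\big)_{i,j}$. Let $\sigma$ be the Legendre character of $\mathbb F_q^\times$ (the unique character of order $2$) and $G_1=\sum_{z\in\mathbb F_q}\psi(\tfrac12z^2)$. Lagrangians $M,L$ are in general position if $M+L=V$. For $(M^\circ,L^\circ)$ in general position define $F_{M^\circ,L^\circ}:\mathcal H_{L^\circ}\to\mathcal H_{M^\circ}$ by $F_{M^\circ,L^\circ}[f](h)=\sum_{m\in M}f((m,0)\cdot h)$, the constant $A_{M^\circ,L^\circ}=(G_1/q)^n\,\sigma\big((-1)^{n(n-1)/2}\omega_\wedge(o_L,o_M)\big)$, and $T_{M^\circ,L^\circ}=A_{M^\circ,L^\circ}\cdot F_{M^\circ,L^\circ}$. *)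

theory Defs
  imports Complex_Main "HOL-Combinatorics.Permutations"
begin

text \<open>Finite field 'k (odd characteristic), symplectic space V = the type 'v,
  a vector space over 'k with scalar multiplication scale.\<close>

definition symplectic_form ::
  "('k::field \<Rightarrow> 'v::ab_group_add \<Rightarrow> 'v) \<Rightarrow> ('v \<Rightarrow> 'v \<Rightarrow> 'k) \<Rightarrow> bool" where
  "symplectic_form scale \<omega> \<longleftrightarrow>
     (\<forall>x y z. \<omega> (x + y) z = \<omega> x z + \<omega> y z) \<and>
     (\<forall>x y z. \<omega> x (y + z) = \<omega> x y + \<omega> x z) \<and>
     (\<forall>c x y. \<omega> (scale c x) y = c * \<omega> x y) \<and>
     (\<forall>c x y. \<omega> x (scale c y) = c * \<omega> x y) \<and>
     (\<forall>x. \<omega> x x = 0) \<and>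
     (\<forall>x. (\<forall>y. \<omega> x y = 0) \<longrightarrow> x = 0)"

definition heis_mult :: "('v::ab_group_add \<Rightarrow> 'v \<Rightarrow> 'k::field) \<Rightarrow> 'v \<times> 'k \<Rightarrow> 'v \<times> 'k \<Rightarrow> 'v \<times> 'k" where
  "heis_mult \<omega> a b = (fst a + fst b, snd a + snd b + \<omega> (fst a) (fst b) / 2)"

definition lagrangian ::
  "('k::field \<Rightarrow> 'v::ab_group_add \<Rightarrow> 'v) \<Rightarrow> ('v \<Rightarrow> 'v \<Rightarrow> 'k) \<Rightarrow> 'v set \<Rightarrow> bool" where
  "lagrangian scale \<omega> L \<longleftrightarrow> module.subspace scale L \<and> (\<forall>x\<in>L. \<forall>y\<in>L. \<omega> x y = 0) \<and>
     2 * vector_space.dim scale L = vector_space.dim scale (UNIV :: 'v set)"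

text \<open>An oriented Lagrangian (L, o_L): the orientation o_L = b_1 \<wedge> ... \<wedge> b_n
  (a nonzero element of the top exterior power of L) is represented by an ordered
  basis bs = [b_1,...,b_n] of L; every nonzero element of the (one-dimensional)
  top exterior power is of this form.\<close>
definition oriented_lagrangian ::
  "('k::field \<Rightarrow> 'v::ab_group_add \<Rightarrow> 'v) \<Rightarrow> ('v \<Rightarrow> 'v \<Rightarrow> 'k) \<Rightarrow> 'v set \<Rightarrow> 'v list \<Rightarrow> bool" where
  "oriented_lagrangian scale \<omega> L bs \<longleftrightarrow> lagrangian scale \<omega> L \<and> distinct bs \<and>
     module.independent scale (set bs) \<and> module.span scale (set bs) = L"

definition general_position :: "'v::ab_group_add set \<Rightarrow> 'v set \<Rightarrow> bool" where
  "general_position M L \<longleftrightarrow> (\<forall>v. \<exists>m\<in>M. \<exists>l\<in>L. v = m + l)"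

definition det_fun :: "(nat \<Rightarrow> nat \<Rightarrow> 'a::comm_ring_1) \<Rightarrow> nat \<Rightarrow> 'a" where
  "det_fun A k = (\<Sum>p | p permutes {..<k}. of_int (sign p) * (\<Prod>i<k. A i (p i)))"

definition omega_wedge :: "('v \<Rightarrow> 'v \<Rightarrow> 'k::field) \<Rightarrow> 'v list \<Rightarrow> 'v list \<Rightarrow> 'k" where
  "omega_wedge \<omega> as bs = (-1) ^ (length as * (length as - 1) div 2) *
     det_fun (\<lambda>i j. \<omega> (as ! i) (bs ! j)) (length as)"

definition legendre_char :: "'k::field \<Rightarrow> complex" where
  "legendre_char x = (if x = 0 then 0 else if (\<exists>y. y ^ 2 = x) then 1 else -1)"

definition gauss_G1 :: "('k::{field,finite} \<Rightarrow> complex) \<Rightarrow> complex" where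
  "gauss_G1 \<psi> = (\<Sum>z\<in>UNIV. \<psi> (z ^ 2 / 2))"

definition heis_space ::
  "('v::ab_group_add \<Rightarrow> 'v \<Rightarrow> 'k::field) \<Rightarrow> ('k \<Rightarrow> complex) \<Rightarrow> 'v set \<Rightarrow> ('v \<times> 'k \<Rightarrow> complex) set" where
  "heis_space \<omega> \<psi> L = {f. \<forall>z. \<forall>l\<in>L. \<forall>h.
     f (heis_mult \<omega> (heis_mult \<omega> (0, z) (l, 0)) h) = \<psi> z * f h}"

definition F_op :: "('v::ab_group_add \<Rightarrow> 'v \<Rightarrow> 'k::field) \<Rightarrow> 'v set \<Rightarrow>
    ('v \<times> 'k \<Rightarrow> complex) \<Rightarrow> ('v \<times> 'k \<Rightarrow> complex)" where
  "F_op \<omega> M f = (\<lambda>h. \<Sum>m\<in>M. f (heis_mult \<omega> (m, 0) h))"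

text \<open>A_{M,L} for oriented Lagrangians (M, oM), (L, oL); n = dim V / 2.\<close>
definition A_const :: "('v \<Rightarrow> 'v \<Rightarrow> 'k::{field,finite}) \<Rightarrow> ('k \<Rightarrow> complex) \<Rightarrow> nat \<Rightarrow>
    'v list \<Rightarrow> 'v list \<Rightarrow> complex" where
  "A_const \<omega> \<psi> n oM oL = (gauss_G1 \<psi> / of_nat (card (UNIV :: 'k set))) ^ n *
     legendre_char ((-1) ^ (n * (n - 1) div 2) * omega_wedge \<omega> oL oM)"

definition T_op :: "('v::ab_group_add \<Rightarrow> 'v \<Rightarrow> 'k::{field,finite}) \<Rightarrow> ('k \<Rightarrow> complex) \<Rightarrow> nat \<Rightarrow>
    'v set \<Rightarrow> 'v list \<Rightarrow> 'v set \<Rightarrow> 'v list \<Rightarrow> ('v \<times> 'k \<Rightarrow> complex) \<Rightarrow> ('v \<times> 'k \<Rightarrow> complex)" where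
  "T_op \<omega> \<psi> n M oM L oL f = (\<lambda>h. A_const \<omega> \<psi> n oM oL * F_op \<omega> M f h)"

end

theory Submission
  imports Defs "Jordan_Normal_Form.Determinant"
begin

locale fchar =
  fixes \<psi> :: "'k::{field,finite} \<Rightarrow> complex"
  assumes two: "(2::'k) \<noteq> 0"
    and hom: "\<And>a b. \<psi> (a + b) = \<psi> a * \<psi> b"
    and nz: "\<And>a. \<psi> a \<noteq> 0"
    and nontriv: "\<exists>a. \<psi> a \<noteq> 1"
begin

lemma psi0: "\<psi> 0 = 1"
proof -
  have "\<psi> 0 = \<psi> 0 * \<psi> 0" using hom[of 0 0] by simp
  thus ?thesis using nz[of 0] by simp
qed

lemma sum_shift: "(\<Sum>t\<in>UNIV. g (t + (s::'k))) = (\<Sum>t\<in>UNIV. (g t :: complex))"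
  by (rule sum.reindex_bij_witness[where i="\<lambda>t. t - s" and j="\<lambda>t. t + s"]) auto

lemma sum_scale: "(a::'k) \<noteq> 0 \<Longrightarrow> (\<Sum>t\<in>UNIV. g (a * t)) = (\<Sum>t\<in>UNIV. (g t :: complex))"
  by (rule sum.reindex_bij_witness[where i="\<lambda>t. t / a" and j="\<lambda>t. a * t"]) auto

lemma char_sum0: "(\<Sum>t\<in>UNIV. \<psi> t) = 0"
proof -
  obtain b where b: "\<psi> b \<noteq> 1" using nontriv by auto
  have "(\<Sum>t\<in>UNIV. \<psi> t) = (\<Sum>t\<in>UNIV. \<psi> (t + b))" by (rule sum_shift[symmetric])
  also have "\<dots> = \<psi> b * (\<Sum>t\<in>UNIV. \<psi> t)" by (simp add: hom sum_distrib_left mult.commute)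
  finally have "(1 - \<psi> b) * (\<Sum>t\<in>UNIV. \<psi> t) = 0" by (simp add: algebra_simps)
  thus ?thesis using b by simp
qed

lemma char_sum0': "a \<noteq> 0 \<Longrightarrow> (\<Sum>t\<in>UNIV. \<psi> (a * t)) = 0"
  using sum_scale[of a \<psi>] char_sum0 by simp

definition sq :: "'k \<Rightarrow> bool" where "sq x \<longleftrightarrow> (\<exists>y. y ^ 2 = x)"

lemma leg_def: "legendre_char x = (if x = 0 then 0 else if sq x then 1 else -1)"
  unfolding legendre_char_def sq_def by simp

lemma card_roots: "card {x::'k. x ^ 2 = t} = (if t = 0 then 1 else if sq t then 2 else 0)"
proof (cases "t = 0")
  case True
  then have "{x::'k. x ^ 2 = t} = {0}" by auto
  then show ?thesis using True by simp
next
  case False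
  show ?thesis
  proof (cases "sq t")
    case True
    then obtain s where s: "s ^ 2 = t" unfolding sq_def by auto
    then have s0: "s \<noteq> 0" using False by auto
    have "{x::'k. x ^ 2 = t} = {s, -s}"
    proof -
      have "x ^ 2 = t \<longleftrightarrow> x = s \<or> x = -s" for x
      proof
        assume "x ^ 2 = t"
        then have "(x - s) * (x + s) = 0" using s by (simp add: algebra_simps power2_eq_square)
        then show "x = s \<or> x = -s" by (auto simp: add_eq_0_iff)
      qed (use s in auto)
      then show ?thesis by auto
    qed
    moreover have "s \<noteq> - s"
    proof
      assume "s = - s" then have "2 * s = 0" by simp
      then show False using two s0 by simp
    qed
    ultimately show ?thesis using True False by simp
  next
    case f2: False
    then have "{x::'k. x ^ 2 = t} = {}" unfolding sq_def by auto
    then show ?thesis using False f2 by simp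
  qed
qed

lemma card_roots_leg: "of_nat (card {x::'k. x ^ 2 = t}) = 1 + legendre_char t"
  unfolding card_roots leg_def by simp

lemma sum_squares: "(\<Sum>x\<in>UNIV. h ((x::'k) ^ 2)) = (\<Sum>t\<in>UNIV. (1 + legendre_char t) * (h t :: complex))"
proof -
  have "(\<Sum>x\<in>UNIV. h (x ^ 2)) = (\<Sum>x\<in>UNIV. \<Sum>t\<in>UNIV. if x ^ 2 = t then h t else 0)"
  proof (rule sum.cong[OF refl])
    fix x :: 'k
    show "h (x ^ 2) = (\<Sum>t\<in>UNIV. if x ^ 2 = t then h t else 0)" by (subst sum.delta') auto
  qed
  also have "\<dots> = (\<Sum>t\<in>UNIV. \<Sum>x\<in>UNIV. if x ^ 2 = t then h t else 0)" by (rule sum.swap)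
  also have "\<dots> = (\<Sum>t\<in>UNIV. of_nat (card {x::'k. x ^ 2 = t}) * h t)"
    by (simp add: sum.If_cases)
  finally show ?thesis by (simp add: card_roots_leg)
qed

lemma leg_sum0: "(\<Sum>t\<in>UNIV. legendre_char (t::'k)) = 0"
  using sum_squares[of "\<lambda>_. 1"] by (simp add: sum.distrib)

lemma leg_vals: "legendre_char x = 0 \<or> legendre_char x = 1 \<or> legendre_char x = -1"
  unfolding legendre_char_def by auto

lemma nonsq_mult: assumes a: "\<not> sq a" and b: "\<not> sq b" shows "sq (a * b)"
proof -
  let ?S = "{t::'k. t \<noteq> 0 \<and> sq t}" and ?NS = "{t::'k. \<not> sq t}"
  have pw: "legendre_char t = (if t \<in> ?S then 1 else 0) - (if t \<in> ?NS then 1 else 0)" for t :: 'k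
    by (auto simp: leg_def sq_def intro: exI[of _ 0])
  have "(\<Sum>t\<in>UNIV. legendre_char (t::'k)) = of_nat (card ?S) - of_nat (card ?NS)"
    unfolding pw sum_subtractf by (simp add: sum.If_cases)
  then have "of_nat (card ?S) = (of_nat (card ?NS) :: complex)" using leg_sum0 by simp
  then have cards: "card ?S = card ?NS" using of_nat_eq_iff by blast
  have a0: "a \<noteq> 0" using a by (auto simp: sq_def intro: exI[of _ 0])
  have sub: "(\<lambda>t. a * t) ` ?S \<subseteq> ?NS"
  proof safe
    fix t s assume t0: "t \<noteq> 0" and "sq t" and m: "sq (a * t)"
    then obtain u v where u: "u ^ 2 = t" and v: "v ^ 2 = a * t" by (auto simp: sq_def)
    have "u \<noteq> 0" using u t0 by auto
    then have "(v / u) ^ 2 = a" using u v t0 by (simp add: power_divide)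
    then show False using a by (auto simp: sq_def)
  qed
  have "inj_on (\<lambda>t. a * t) ?S" using a0 by (auto simp: inj_on_def)
  then have "card ((\<lambda>t. a * t) ` ?S) = card ?NS" using cards by (simp add: card_image)
  then have "(\<lambda>t. a * t) ` ?S = ?NS" using sub by (intro card_subset_eq) auto
  then have "b \<in> (\<lambda>t. a * t) ` ?S" using b by simp
  then obtain t where t: "t \<noteq> 0" "sq t" "b = a * t" by blast
  then obtain u where "u ^ 2 = t" by (auto simp: sq_def)
  then have "(a * u) ^ 2 = a * b" using t by (simp add: power2_eq_square algebra_simps)
  then show ?thesis by (auto simp: sq_def)
qed

lemma leg_mult: "legendre_char (x * y) = legendre_char x * legendre_char (y::'k)"
proof (cases "x = 0 \<or> y = 0")
  case True then show ?thesis by (auto simp: leg_def)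
next
  case False
  then have x0: "x \<noteq> 0" and y0: "y \<noteq> 0" by auto
  have sqsq: "sq (u * v)" if su: "sq u" and sv: "sq v" for u v
  proof -
    obtain a b where "a ^ 2 = u" "b ^ 2 = v" using su sv unfolding sq_def by blast
    then have "(a * b) ^ 2 = u * v" by (simp add: power_mult_distrib)
    then show ?thesis by (auto simp: sq_def)
  qed
  have sqn: "\<not> sq (u * v)" if h1: "sq u" and h2: "\<not> sq v" and h3: "u \<noteq> 0" for u v
  proof
    assume uv: "sq (u * v)"
    obtain s where s: "s ^ 2 = u" using h1 unfolding sq_def by blast
    obtain t where t: "t ^ 2 = u * v" using uv unfolding sq_def by blast
    have "s \<noteq> 0" using s h3 by auto
    then have "(t / s) ^ 2 = v" using s t h3 by (simp add: power_divide)
    then show False using h2 unfolding sq_def by blast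
  qed
  have xy0: "x * y \<noteq> 0" using x0 y0 by simp
  show ?thesis
  proof (cases "sq x"; cases "sq y")
    assume "sq x" "sq y" then show ?thesis using sqsq[of x y] x0 y0 xy0 by (simp add: leg_def)
  next
    assume "sq x" "\<not> sq y" then show ?thesis using sqn[of x y] x0 y0 xy0 by (simp add: leg_def)
  next
    assume "\<not> sq x" "sq y" then show ?thesis using sqn[of y x] x0 y0 xy0 by (simp add: leg_def mult.commute)
  next
    assume "\<not> sq x" "\<not> sq y" then show ?thesis using nonsq_mult[of x y] x0 y0 xy0 by (simp add: leg_def)
  qed
qed

lemma leg_sq: assumes "x \<noteq> 0" shows "legendre_char (x ^ 2 * y) = legendre_char (y::'k)"
proof -
  have "legendre_char (x ^ 2) = 1" using assms by (auto simp: leg_def sq_def)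
  then show ?thesis by (simp add: leg_mult)
qed

lemma leg_square1: "x \<noteq> 0 \<Longrightarrow> legendre_char x * legendre_char (x::'k) = 1"
  by (auto simp: leg_def)

lemma gauss1: assumes a: "a \<noteq> 0" shows "(\<Sum>x\<in>UNIV. \<psi> (a * x ^ 2 / 2)) = legendre_char a * gauss_G1 \<psi>"
proof -
  have key: "(\<Sum>x\<in>UNIV. \<psi> (b * x ^ 2 / 2)) = legendre_char b * (\<Sum>s\<in>UNIV. legendre_char s * \<psi> (s / 2))"
    if b: "b \<noteq> 0" for b
  proof -
    have "(\<Sum>x\<in>UNIV. \<psi> (b * x ^ 2 / 2)) = (\<Sum>t\<in>UNIV. (1 + legendre_char t) * \<psi> (b * t / 2))"
      using sum_squares[of "\<lambda>t. \<psi> (b * t / 2)"] by simp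
    also have "\<dots> = (\<Sum>t\<in>UNIV. \<psi> ((b/2) * t)) + (\<Sum>t\<in>UNIV. legendre_char t * \<psi> (b * t / 2))"
      by (simp add: algebra_simps sum.distrib)
    also have "(\<Sum>t\<in>UNIV. \<psi> ((b/2) * t)) = 0" using b two by (intro char_sum0') auto
    also have "(\<Sum>t\<in>UNIV. legendre_char t * \<psi> (b * t / 2)) =
        (\<Sum>t\<in>UNIV. legendre_char ((1/b) * t) * \<psi> (b * ((1/b) * t) / 2))"
      using b by (intro sum_scale[symmetric, of "1/b"]) simp
    also have "\<dots> = (\<Sum>t\<in>UNIV. legendre_char b * (legendre_char t * \<psi> (t / 2)))"
    proof (rule sum.cong[OF refl])
      fix t
      have "legendre_char (1/b) = legendre_char b"
        using leg_sq[of "1/b" b] b by (simp add: power2_eq_square)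
      then have "legendre_char ((1/b) * t) = legendre_char b * legendre_char t"
        using leg_mult[of "1/b" t] by simp
      moreover have "b * ((1/b) * t) = t" using b by simp
      ultimately show "legendre_char ((1/b) * t) * \<psi> (b * ((1/b) * t) / 2) = legendre_char b * (legendre_char t * \<psi> (t / 2))"
        by simp
    qed
    finally show ?thesis by (simp add: sum_distrib_left)
  qed
  have "gauss_G1 \<psi> = (\<Sum>s\<in>UNIV. legendre_char s * \<psi> (s / 2))"
  proof -
    have "legendre_char (1::'k) = 1" by (auto simp: leg_def sq_def intro: exI[of _ 1])
    then show ?thesis using key[of 1] unfolding gauss_G1_def by simp
  qed
  then show ?thesis using key[OF a] by simp
qed

end

definition Qf :: "(nat \<Rightarrow> nat \<Rightarrow> 'k::field) \<Rightarrow> nat \<Rightarrow> (nat \<Rightarrow> 'k) \<Rightarrow> 'k" where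
  "Qf C m c = (\<Sum>i<m. \<Sum>j<m. C i j * (c i * c j))"

abbreviation Kn :: "nat \<Rightarrow> (nat \<Rightarrow> 'k) set" where
  "Kn m \<equiv> PiE {..<m} (\<lambda>_. UNIV)"

lemma det_fun_det: "det_fun C k = det (mat k k (\<lambda>(i,j). C i j))"
  unfolding det_fun_def det_def by (simp add: atLeast0LessThan)

lemma mult_entry:
  assumes "i < n" "j < n"
  shows "(mat n n (\<lambda>(i,j). A i j) * mat n n (\<lambda>(i,j). B i j)) $$ (i,j) = (\<Sum>k<n. A i k * B k j)"
  using assms by (simp add: scalar_prod_def atLeast0LessThan)

lemma det_ut1:
  assumes "\<And>i j. j < i \<Longrightarrow> i < n \<Longrightarrow> A i j = 0" "\<And>i. i < n \<Longrightarrow> A i i = 1"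
  shows "det (mat n n (\<lambda>(i,j). A i j)) = 1"
proof -
  have "upper_triangular (mat n n (\<lambda>(i,j). A i j))"
    unfolding upper_triangular_def using assms(1) by auto
  then have "det (mat n n (\<lambda>(i,j). A i j)) = prod_list (diag_mat (mat n n (\<lambda>(i,j). A i j)))"
    by (rule det_upper_triangular[of _ n]) auto
  also have "diag_mat (mat n n (\<lambda>(i,j). A i j)) = map (\<lambda>_. 1) [0..<n]"
    unfolding diag_mat_def using assms(2) by simp
  also have "prod_list (map (\<lambda>_. 1) [0..<n]) = (1::'a)" by (induct n) auto
  finally show ?thesis .
qed

lemma sum_split_Kn:
  "(\<Sum>c\<in>Kn (Suc n). F c) = (\<Sum>c\<in>Kn n. \<Sum>x\<in>(UNIV::'k::finite set). F (c(n := x)))"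
proof -
  have "Kn (Suc n) = (\<lambda>(y, g). g(n := y)) ` ((UNIV::'k set) \<times> Kn n)"
    using PiE_insert_eq[of n "{..<n}" "\<lambda>_. UNIV::'k set"] by (simp add: lessThan_Suc)
  moreover have "inj_on (\<lambda>(y, g). g(n := y)) ((UNIV::'k set) \<times> Kn n)"
    by (rule inj_combinator) simp
  ultimately have "(\<Sum>c\<in>Kn (Suc n). F c) = (\<Sum>p\<in>(UNIV::'k set) \<times> Kn n. F ((\<lambda>(y, g). g(n := y)) p))"
    by (simp add: sum.reindex)
  also have "\<dots> = (\<Sum>(x,c)\<in>(UNIV::'k set) \<times> Kn n. F (c(n := x)))"
    by (intro sum.cong refl) auto
  also have "\<dots> = (\<Sum>x\<in>(UNIV::'k set). \<Sum>c\<in>Kn n. F (c(n := x)))"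
    by (simp add: sum.cartesian_product)
  also have "\<dots> = (\<Sum>c\<in>Kn n. \<Sum>x\<in>(UNIV::'k set). F (c(n := x)))"
    by (rule sum.swap)
  finally show ?thesis .
qed

lemma Qf_upd: "Qf C n (c(n := x)) = Qf C n c"
  unfolding Qf_def by (intro sum.cong refl) auto

definition schur :: "(nat \<Rightarrow> nat \<Rightarrow> 'k::field) \<Rightarrow> nat \<Rightarrow> nat \<Rightarrow> nat \<Rightarrow> 'k" where
  "schur C n i j = C i j - C i n * C n j / C n n"

lemma Qf_schur:
  fixes C :: "nat \<Rightarrow> nat \<Rightarrow> 'k::field"
  assumes sym: "\<And>i j. i < Suc n \<Longrightarrow> j < Suc n \<Longrightarrow> C i j = C j i" and a: "C n n \<noteq> 0"
  shows "Qf C (Suc n) c = Qf (schur C n) n c + C n n * (c n + (\<Sum>j<n. C n j * c j) / C n n) ^ 2"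
proof -
  define r where "r = (\<Sum>j<n. C n j * c j)"
  define a where "a = C n n"
  have "Qf C (Suc n) c = Qf C n c + (\<Sum>i<n. C i n * (c i * c n)) + (\<Sum>j<n. C n j * (c n * c j)) + a * (c n * c n)"
    unfolding Qf_def a_def by (simp add: sum.distrib)
  also have "(\<Sum>i<n. C i n * (c i * c n)) = c n * r"
    unfolding r_def by (simp add: sum_distrib_left sym algebra_simps)
  also have "(\<Sum>j<n. C n j * (c n * c j)) = c n * r"
    unfolding r_def by (simp add: sum_distrib_left algebra_simps)
  finally have e1: "Qf C (Suc n) c = Qf C n c + 2 * c n * r + a * (c n * c n)" by simp
  have "Qf (schur C n) n c = Qf C n c - (\<Sum>i<n. \<Sum>j<n. (C i n * c i) * (C n j * c j)) / a"
    unfolding Qf_def schur_def a_def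
    by (simp add: sum_subtractf sum_divide_distrib algebra_simps)
  also have "(\<Sum>i<n. \<Sum>j<n. (C i n * c i) * (C n j * c j)) = r * r"
    unfolding r_def by (simp add: sum_product sym mult.commute)
  finally have e2: "Qf (schur C n) n c = Qf C n c - r * r / a" .
  have a0: "a \<noteq> 0" using a a_def by simp
  show ?thesis unfolding e1 e2 r_def[symmetric] a_def[symmetric]
    using a0 by (simp add: field_simps power2_eq_square)
qed

lemma det_schur:
  fixes C :: "nat \<Rightarrow> nat \<Rightarrow> 'k::field"
  assumes a: "C n n \<noteq> 0"
  shows "det_fun C (Suc n) = C n n * det_fun (schur C n) n"
proof -
  define a where "a = C n n"
  define E where "E = (\<lambda>i j. if i = j then 1 else if j = n then - C i n / a else (0::'k))"
  let ?M = "mat (Suc n) (Suc n) (\<lambda>(i,j). C i j)"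
  let ?E = "mat (Suc n) (Suc n) (\<lambda>(i,j). E i j)"
  let ?A1 = "mat n n (\<lambda>(i,j). schur C n i j)"
  let ?A3 = "mat 1 n (\<lambda>(i,j). C n j)"
  let ?A4 = "mat 1 1 (\<lambda>_. a)"
  have dE: "det ?E = 1" by (rule det_ut1) (auto simp: E_def)
  have prod: "?E * ?M = four_block_mat ?A1 (0\<^sub>m n 1) ?A3 ?A4"
  proof (rule eq_matI)
    fix i j assume i: "i < dim_row (four_block_mat ?A1 (0\<^sub>m n 1) ?A3 ?A4)"
      and j: "j < dim_col (four_block_mat ?A1 (0\<^sub>m n 1) ?A3 ?A4)"
    then have i': "i < Suc n" and j': "j < Suc n" by auto
    have "(?E * ?M) $$ (i,j) = (\<Sum>k<Suc n. E i k * C k j)"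
      using mult_entry[OF i' j'] by simp
    also have "\<dots> = (\<Sum>k<n. E i k * C k j) + E i n * C n j" by simp
    also have "\<dots> = (if i < n then C i j - C i n * C n j / a else C n j)"
    proof (cases "i < n")
      case True
      have "(\<Sum>k<n. E i k * C k j) = (\<Sum>k<n. if k = i then C k j else 0)"
        by (intro sum.cong refl) (auto simp: E_def)
      also have "\<dots> = C i j" using True by simp
      finally show ?thesis using True by (simp add: E_def)
    next
      case False
      then have "i = n" using i' by simp
      have "(\<Sum>k<n. E i k * C k j) = 0"
        by (intro sum.neutral) (auto simp: E_def \<open>i = n\<close>)
      then show ?thesis using False \<open>i = n\<close> by (simp add: E_def)
    qed
    also have "\<dots> = four_block_mat ?A1 (0\<^sub>m n 1) ?A3 ?A4 $$ (i,j)"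
    proof (cases "j < n")
      case True then show ?thesis using i' j' by (auto simp: schur_def a_def)
    next
      case False then have "j = n" using j' by simp
      then show ?thesis using i' j' a by (auto simp: schur_def a_def)
    qed
    finally show "(?E * ?M) $$ (i,j) = four_block_mat ?A1 (0\<^sub>m n 1) ?A3 ?A4 $$ (i,j)" .
  qed auto
  have d4: "det ?A4 = a"
  proof -
    have "upper_triangular ?A4" unfolding upper_triangular_def by auto
    then have "det ?A4 = prod_list (diag_mat ?A4)" using det_upper_triangular[OF _ mat_carrier] by blast
    then show ?thesis by (simp add: diag_mat_def)
  qed
  have "det_fun C (Suc n) = det ?E * det ?M" using dE by (simp add: det_fun_det)
  also have "\<dots> = det (?E * ?M)" by (rule det_mult[symmetric]) auto
  also have "\<dots> = det ?A1 * det ?A4"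
    unfolding prod by (rule det_four_block_mat_upper_right_zero_col) auto
  finally show ?thesis using d4 by (simp add: det_fun_det a_def)
qed

definition tv :: "(nat \<Rightarrow> nat \<Rightarrow> 'k::field) \<Rightarrow> nat \<Rightarrow> nat \<Rightarrow> 'k \<Rightarrow> nat \<Rightarrow> nat \<Rightarrow> 'k" where
  "tv C n j t i k = C i k + (if k = n then t * C i j else 0) +
     (if i = n then t * (C j k + (if k = n then t * C j j else 0)) else 0)"

lemma Qf_tv:
  fixes C :: "nat \<Rightarrow> nat \<Rightarrow> 'k::field"
  assumes j: "j < n"
  shows "Qf C (Suc n) (c(j := c j + t * c n)) = Qf (tv C n j t) (Suc n) c"
proof -
  define e where "e = (\<lambda>p. if p = j then t * c n else 0)"
  have d: "c(j := c j + t * c n) = (\<lambda>p. c p + e p)" by (auto simp: e_def)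
  have jn: "j \<in> {..<Suc n}" "n \<in> {..<Suc n}" using j by auto
  have "Qf C (Suc n) (\<lambda>p. c p + e p) =
     (\<Sum>i<Suc n. \<Sum>k<Suc n. C i k * (c i * c k)) + (\<Sum>i<Suc n. \<Sum>k<Suc n. C i k * (c i * e k))
      + (\<Sum>i<Suc n. \<Sum>k<Suc n. C i k * (e i * c k)) + (\<Sum>i<Suc n. \<Sum>k<Suc n. C i k * (e i * e k))"
    unfolding Qf_def by (simp add: algebra_simps sum.distrib)
  also have "(\<Sum>i<Suc n. \<Sum>k<Suc n. C i k * (c i * e k)) = (\<Sum>i<Suc n. \<Sum>k<Suc n. if k = j then C i j * (c i * (t * c n)) else 0)"
    by (intro sum.cong refl) (simp add: e_def)
  also have "\<dots> = (\<Sum>i<Suc n. C i j * (c i * (t * c n)))" using jn by simp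
  also have "(\<Sum>i<Suc n. \<Sum>k<Suc n. C i k * (e i * c k)) = (\<Sum>i<Suc n. if i = j then (\<Sum>k<Suc n. C j k * (t * c n * c k)) else 0)"
    by (intro sum.cong refl) (simp add: e_def)
  also have "\<dots> = (\<Sum>k<Suc n. C j k * (t * c n * c k))" using jn by simp
  also have "(\<Sum>i<Suc n. \<Sum>k<Suc n. C i k * (e i * e k)) = (\<Sum>i<Suc n. if i = j then C j j * (t * c n * (t * c n)) else 0)"
  proof (rule sum.cong[OF refl])
    fix i
    show "(\<Sum>k<Suc n. C i k * (e i * e k)) = (if i = j then C j j * (t * c n * (t * c n)) else 0)"
    proof (cases "i = j")
      case True
      have "(\<Sum>k<Suc n. C i k * (e i * e k)) = (\<Sum>k<Suc n. if k = j then C j j * (t * c n * (t * c n)) else 0)"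
        by (intro sum.cong refl) (simp add: e_def True)
      also have "\<dots> = C j j * (t * c n * (t * c n))" using jn by simp
      finally show ?thesis using True by simp
    qed (simp add: e_def)
  qed
  also have "\<dots> = C j j * (t * c n * (t * c n))" using jn by simp
  finally have l: "Qf C (Suc n) (\<lambda>p. c p + e p) = Qf C (Suc n) c + (\<Sum>i<Suc n. C i j * (c i * (t * c n)))
      + (\<Sum>k<Suc n. C j k * (t * c n * c k)) + C j j * (t * c n * (t * c n))"
    unfolding Qf_def .
  have "Qf (tv C n j t) (Suc n) c =
      (\<Sum>i<Suc n. \<Sum>k<Suc n. C i k * (c i * c k))
      + (\<Sum>i<Suc n. \<Sum>k<Suc n. (if k = n then t * C i j else 0) * (c i * c k))
      + (\<Sum>i<Suc n. \<Sum>k<Suc n. (if i = n then t * C j k else 0) * (c i * c k))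
      + (\<Sum>i<Suc n. \<Sum>k<Suc n. (if i = n then if k = n then t * (t * C j j) else 0 else 0) * (c i * c k))"
    unfolding Qf_def tv_def by (simp add: algebra_simps sum.distrib)
  also have "(\<Sum>i<Suc n. \<Sum>k<Suc n. (if k = n then t * C i j else 0) * (c i * c k)) =
      (\<Sum>i<Suc n. \<Sum>k<Suc n. if k = n then C i j * (c i * (t * c n)) else 0)"
    by (intro sum.cong refl) simp
  also have "\<dots> = (\<Sum>i<Suc n. C i j * (c i * (t * c n)))" using jn by simp
  also have "(\<Sum>i<Suc n. \<Sum>k<Suc n. (if i = n then t * C j k else 0) * (c i * c k)) =
      (\<Sum>i<Suc n. if i = n then (\<Sum>k<Suc n. C j k * (t * c n * c k)) else 0)"
    by (intro sum.cong refl) (simp add: algebra_simps)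
  also have "\<dots> = (\<Sum>k<Suc n. C j k * (t * c n * c k))" using jn by (simp add: algebra_simps)
  also have "(\<Sum>i<Suc n. \<Sum>k<Suc n. (if i = n then if k = n then t * (t * C j j) else 0 else 0) * (c i * c k)) =
      (\<Sum>i<Suc n. if i = n then (\<Sum>k<Suc n. if k = n then C j j * (t * c n * (t * c n)) else 0) else 0)"
    by (intro sum.cong refl) simp
  also have "\<dots> = C j j * (t * c n * (t * c n))" using jn by simp
  finally have r: "Qf (tv C n j t) (Suc n) c = Qf C (Suc n) c + (\<Sum>i<Suc n. C i j * (c i * (t * c n)))
      + (\<Sum>k<Suc n. C j k * (t * c n * c k)) + C j j * (t * c n * (t * c n))"
    unfolding Qf_def .
  show ?thesis unfolding d l r ..
qed

lemma sum_A_left: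
  assumes i: "i < Suc n" and j: "j < n"
  shows "(\<Sum>p<Suc n. (if p = i then 1 else if p = j \<and> i = n then t else 0) * X p) = X i + (if i = n then t * X j else (0::'k::field))"
proof -
  have "(\<Sum>p<Suc n. (if p = i then 1 else if p = j \<and> i = n then t else 0) * X p) =
        (\<Sum>p<Suc n. (if p = i then X p else 0) + (if p = j then (if i = n then t * X p else 0) else 0))"
    using j by (intro sum.cong refl) auto
  also have "\<dots> = X i + (if i = n then t * X j else 0)"
    using i j by (simp add: sum.distrib)
  finally show ?thesis .
qed

lemma sum_A_right:
  assumes k: "k < Suc n" and j: "j < n"
  shows "(\<Sum>p<Suc n. X p * (if p = k then 1 else if p = j \<and> k = n then t else 0)) = X k + (if k = n then t * X j else (0::'k::field))"
  using sum_A_left[OF k j, of t X] by (simp add: mult.commute)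

lemma det_tv:
  fixes C :: "nat \<Rightarrow> nat \<Rightarrow> 'k::field"
  assumes j: "j < n"
  shows "det_fun (tv C n j t) (Suc n) = det_fun C (Suc n)"
proof -
  define A where "A = (\<lambda>i k. if i = k then 1 else if i = j \<and> k = n then t else (0::'k))"
  let ?M = "mat (Suc n) (Suc n) (\<lambda>(i,j). C i j)"
  let ?A = "mat (Suc n) (Suc n) (\<lambda>(i,j). A i j)"
  let ?At = "mat (Suc n) (Suc n) (\<lambda>(i,j). A j i)"
  define X where "X = (\<lambda>q k. C q k + (if k = n then t * C q j else 0))"
  have dA: "det ?A = 1" by (rule det_ut1) (use j in \<open>auto simp: A_def\<close>)
  have tA: "transpose_mat ?A = ?At" by (rule eq_matI) auto
  have dAt: "det ?At = 1" using det_transpose[of ?A "Suc n"] dA tA by simp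
  have MA: "?M * ?A = mat (Suc n) (Suc n) (\<lambda>(q,k). X q k)"
  proof (rule eq_matI)
    fix q k assume "q < dim_row (mat (Suc n) (Suc n) (\<lambda>(q,k). X q k))" "k < dim_col (mat (Suc n) (Suc n) (\<lambda>(q,k). X q k))"
    then have q: "q < Suc n" and k: "k < Suc n" by auto
    show "(?M * ?A) $$ (q,k) = mat (Suc n) (Suc n) (\<lambda>(q,k). X q k) $$ (q,k)"
      using mult_entry[OF q k, of C A] sum_A_right[OF k j, of "\<lambda>p. C q p" t] q k
      by (simp add: A_def X_def)
  qed auto
  have AMA: "?At * (?M * ?A) = mat (Suc n) (Suc n) (\<lambda>(i,k). tv C n j t i k)"
  proof (rule eq_matI)
    fix i k assume "i < dim_row (mat (Suc n) (Suc n) (\<lambda>(i,k). tv C n j t i k))" "k < dim_col (mat (Suc n) (Suc n) (\<lambda>(i,k). tv C n j t i k))"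
    then have i: "i < Suc n" and k: "k < Suc n" by auto
    show "(?At * (?M * ?A)) $$ (i,k) = mat (Suc n) (Suc n) (\<lambda>(i,k). tv C n j t i k) $$ (i,k)"
      unfolding MA using mult_entry[OF i k, of "\<lambda>i k. A k i" X] sum_A_left[OF i j, of t "\<lambda>p. X p k"] i k
      by (simp add: A_def X_def tv_def)
  qed auto
  have "det_fun (tv C n j t) (Suc n) = det (?At * (?M * ?A))" unfolding AMA det_fun_det by simp
  also have "\<dots> = det ?At * det (?M * ?A)" by (rule det_mult) auto
  also have "det (?M * ?A) = det ?M * det ?A" by (rule det_mult) auto
  finally show ?thesis using dA dAt by (simp add: det_fun_det)
qed

lemma sum_tv_reindex:
  fixes t :: "'k::field" and F :: "(nat \<Rightarrow> 'k) \<Rightarrow> complex"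
  assumes j: "j < n"
  shows "(\<Sum>c\<in>Kn (Suc n). F (c(j := c j + t * c n))) = (\<Sum>c\<in>Kn (Suc n). (F c :: complex))"
proof (rule sum.reindex_bij_witness[where i="\<lambda>c. c(j := c j - t * c n)" and j="\<lambda>c. c(j := c j + t * c n)"])
  fix c :: "nat \<Rightarrow> 'k" assume c: "c \<in> Kn (Suc n)"
  show "(c(j := c j + t * c n))(j := (c(j := c j + t * c n)) j - t * (c(j := c j + t * c n)) n) = c"
    using j by auto
  show "(c(j := c j - t * c n))(j := (c(j := c j - t * c n)) j + t * (c(j := c j - t * c n)) n) = c"
    using j by auto
  show "c(j := c j + t * c n) \<in> Kn (Suc n)" "c(j := c j - t * c n) \<in> Kn (Suc n)"
    using c j by (auto simp: PiE_iff extensional_def)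
  show "F (c(j := c j + t * c n)) = F (c(j := c j + t * c n))" ..
qed

lemma det_zero_row:
  assumes i: "i < m" and z: "\<And>k. k < m \<Longrightarrow> C i k = 0"
  shows "det_fun C m = 0"
  unfolding det_fun_def
proof (rule sum.neutral, rule ballI)
  fix p assume "p \<in> {p. p permutes {..<m}}"
  then have "p i < m" using i permutes_in_image by fastforce
  then have "(\<Prod>i<m. C i (p i)) = 0" using i z by (intro prod_zero) auto
  then show "of_int (sign p) * (\<Prod>i<m. C i (p i)) = 0" by simp
qed

context fchar begin

lemma schur_step:
  fixes C :: "nat \<Rightarrow> nat \<Rightarrow> 'k"
  assumes IH: "\<And>C. (\<forall>i<n. \<forall>j<n. C i j = C j i) \<Longrightarrow> det_fun C n \<noteq> 0 \<Longrightarrow>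
      (\<Sum>c\<in>Kn n. \<psi> (Qf C n c / 2)) = gauss_G1 \<psi> ^ n * legendre_char (det_fun C n)"
    and sym: "\<forall>i<Suc n. \<forall>j<Suc n. C i j = C j i" and a: "C n n \<noteq> 0" and d: "det_fun C (Suc n) \<noteq> 0"
  shows "(\<Sum>c\<in>Kn (Suc n). \<psi> (Qf C (Suc n) c / 2)) = gauss_G1 \<psi> ^ Suc n * legendre_char (det_fun C (Suc n))"
proof -
  define a where "a = C n n"
  define r where "r = (\<lambda>c. (\<Sum>j<n. C n j * c j) / a)"
  have sym': "\<And>i j. i < Suc n \<Longrightarrow> j < Suc n \<Longrightarrow> C i j = C j i" using sym by auto
  have ssym: "\<forall>i<n. \<forall>j<n. schur C n i j = schur C n j i"
    unfolding schur_def using sym by (auto simp: mult.commute)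
  have dd: "det_fun C (Suc n) = a * det_fun (schur C n) n" using det_schur[of C n, OF a] a_def by simp
  then have d': "det_fun (schur C n) n \<noteq> 0" using d by auto
  have ru: "r (c(n := x)) = r c" for c x unfolding r_def by (intro arg_cong[where f="\<lambda>s. s / a"] sum.cong) auto
  have "(\<Sum>c\<in>Kn (Suc n). \<psi> (Qf C (Suc n) c / 2)) = (\<Sum>c\<in>Kn n. \<Sum>x\<in>UNIV. \<psi> (Qf C (Suc n) (c(n := x)) / 2))"
    by (rule sum_split_Kn)
  also have "\<dots> = (\<Sum>c\<in>Kn n. \<Sum>x\<in>UNIV. \<psi> (Qf (schur C n) n c / 2) * \<psi> (a * (x + r c) ^ 2 / 2))"
  proof (intro sum.cong refl)
    fix c x
    have "Qf C (Suc n) (c(n := x)) = Qf (schur C n) n c + a * (x + r c) ^ 2"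
      using Qf_schur[where C=C and n=n and c="c(n := x)", OF sym' a] ru[of c x] unfolding r_def a_def
      by (simp add: Qf_upd)
    then show "\<psi> (Qf C (Suc n) (c(n := x)) / 2) = \<psi> (Qf (schur C n) n c / 2) * \<psi> (a * (x + r c) ^ 2 / 2)"
      by (simp add: add_divide_distrib hom)
  qed
  also have "\<dots> = (\<Sum>c\<in>Kn n. \<psi> (Qf (schur C n) n c / 2) * (legendre_char a * gauss_G1 \<psi>))"
  proof (intro sum.cong refl)
    fix c
    have "(\<Sum>x\<in>UNIV. \<psi> (a * (x + r c) ^ 2 / 2)) = (\<Sum>x\<in>UNIV. \<psi> (a * x ^ 2 / 2))"
      by (rule sum_shift)
    also have "\<dots> = legendre_char a * gauss_G1 \<psi>" using gauss1 a a_def by simp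
    finally show "(\<Sum>x\<in>UNIV. \<psi> (Qf (schur C n) n c / 2) * \<psi> (a * (x + r c) ^ 2 / 2)) =
        \<psi> (Qf (schur C n) n c / 2) * (legendre_char a * gauss_G1 \<psi>)"
      by (simp add: sum_distrib_left[symmetric])
  qed
  also have "\<dots> = (legendre_char a * gauss_G1 \<psi>) * (\<Sum>c\<in>Kn n. \<psi> (Qf (schur C n) n c / 2))"
    by (simp add: sum_distrib_left mult.commute)
  also have "\<dots> = (legendre_char a * gauss_G1 \<psi>) * (gauss_G1 \<psi> ^ n * legendre_char (det_fun (schur C n) n))"
    using IH[OF ssym d'] by simp
  also have "\<dots> = gauss_G1 \<psi> ^ Suc n * legendre_char (det_fun C (Suc n))"
    unfolding dd leg_mult by (simp add: algebra_simps)
  finally show ?thesis .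
qed

lemma gauss_multi:
  fixes C :: "nat \<Rightarrow> nat \<Rightarrow> 'k"
  assumes "\<forall>i<m. \<forall>j<m. C i j = C j i" and "det_fun C m \<noteq> 0"
  shows "(\<Sum>c\<in>Kn m. \<psi> (Qf C m c / 2)) = gauss_G1 \<psi> ^ m * legendre_char (det_fun C m)"
  using assms
proof (induction m arbitrary: C)
  case 0
  have "det_fun C 0 = 1" unfolding det_fun_det by (rule det_ut1) auto
  moreover have "legendre_char (1::'k) = 1" by (auto simp: leg_def sq_def intro: exI[of _ 1])
  ultimately show ?case by (simp add: Qf_def psi0)
next
  case (Suc n)
  show ?case
  proof (cases "C n n = 0")
    case False
    then show ?thesis using schur_step[OF Suc.IH Suc.prems(1) False Suc.prems(2)] by blast
  next
    case True
    have "\<exists>j<n. C n j \<noteq> 0"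
    proof (rule ccontr)
      assume "\<not> ?thesis"
      then have "\<And>k. k < Suc n \<Longrightarrow> C n k = 0" using True less_Suc_eq by auto
      then have "det_fun C (Suc n) = 0" by (intro det_zero_row[of n]) auto
      then show False using Suc.prems by simp
    qed
    then obtain j where j: "j < n" and b: "C n j \<noteq> 0" by blast
    have sym': "C j n = C n j" using Suc.prems j by auto
    have tvnn: "tv C n j t n n = 2 * t * C n j + t * t * C j j" for t
      unfolding tv_def using True sym' j by (simp add: algebra_simps)
    obtain t where t: "tv C n j t n n \<noteq> 0"
    proof (cases "tv C n j 1 n n = 0")
      case False then show ?thesis using that by blast
    next
      case True1: True
      have "tv C n j (-1) n n \<noteq> 0"
      proof
        assume "tv C n j (-1) n n = 0"
        then have "2 * (2 * C n j) = 0" using True1 tvnn[of 1] tvnn[of "-1"] by (simp add: algebra_simps)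
        then show False using b two by (simp only: mult_eq_0_iff) simp
      qed
      then show ?thesis using that by blast
    qed
    let ?C' = "tv C n j t"
    have sym2: "\<forall>i<Suc n. \<forall>k<Suc n. ?C' i k = ?C' k i"
      using Suc.prems(1) j unfolding tv_def by (auto simp: algebra_simps)
    have dt: "det_fun ?C' (Suc n) = det_fun C (Suc n)" by (rule det_tv[OF j])
    have "(\<Sum>c\<in>Kn (Suc n). \<psi> (Qf C (Suc n) c / 2)) = (\<Sum>c\<in>Kn (Suc n). \<psi> (Qf C (Suc n) (c(j := c j + t * c n)) / 2))"
      by (rule sum_tv_reindex[OF j, symmetric])
    also have "\<dots> = (\<Sum>c\<in>Kn (Suc n). \<psi> (Qf ?C' (Suc n) c / 2))"
      by (simp add: Qf_tv[OF j])
    also have "\<dots> = gauss_G1 \<psi> ^ Suc n * legendre_char (det_fun ?C' (Suc n))"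
      by (rule schur_step[OF Suc.IH sym2 t]) (use dt Suc.prems in auto)
    finally show ?thesis using dt by simp
  qed
qed

end

lemma det_fun1: "det_fun D (Suc 0) = D 0 0"
proof -
  have "upper_triangular (mat (Suc 0) (Suc 0) (\<lambda>(i,j). D i j))" unfolding upper_triangular_def by auto
  then have "det (mat (Suc 0) (Suc 0) (\<lambda>(i,j). D i j)) = prod_list (diag_mat (mat (Suc 0) (Suc 0) (\<lambda>(i,j). D i j)))"
    using det_upper_triangular[OF _ mat_carrier] by blast
  then show ?thesis by (simp add: det_fun_det diag_mat_def)
qed

context fchar begin

lemma sum_prod_zero: "(\<Sum>y\<in>UNIV. \<psi> (y * x)) = (if x = 0 then of_nat (card (UNIV::'k set)) else 0)"
  using char_sum0'[of x] psi0 by (auto simp: mult.commute)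

lemma gauss_sq: "gauss_G1 \<psi> ^ 2 = legendre_char (-1::'k) * of_nat (card (UNIV::'k set))"
proof -
  define C :: "nat \<Rightarrow> nat \<Rightarrow> 'k" where "C = (\<lambda>i j. if i = 1 \<and> j = 1 then 1 else if i = j then 0 else (1::'k))"
  have C11: "C 1 1 = 1" by (simp add: C_def)
  have "det_fun C (Suc (Suc 0)) = C 1 1 * det_fun (schur C 1) (Suc 0)"
    using det_schur[of C 1] C11 by simp
  also have "\<dots> = -1" by (simp add: det_fun1 schur_def C_def)
  finally have d: "det_fun C (Suc (Suc 0)) = -1" .
  have sym: "\<forall>i<Suc (Suc 0). \<forall>j<Suc (Suc 0). C i j = C j i" by (auto simp: C_def)
  have "(\<Sum>c\<in>Kn (Suc (Suc 0)). \<psi> (Qf C (Suc (Suc 0)) c / 2)) = gauss_G1 \<psi> ^ Suc (Suc 0) * legendre_char (-1::'k)"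
    using gauss_multi[OF sym] d by simp
  moreover have "(\<Sum>c\<in>Kn (Suc (Suc 0)). \<psi> (Qf C (Suc (Suc 0)) c / 2)) = of_nat (card (UNIV::'k set))"
  proof -
    have q: "Qf C (Suc (Suc 0)) (((\<lambda>_. undefined)(0 := y))(Suc 0 := x)) = 2 * (y * x) + x * x" for x y
      unfolding Qf_def by (simp add: C_def lessThan_Suc)
    have "(\<Sum>c\<in>Kn (Suc (Suc 0)). \<psi> (Qf C (Suc (Suc 0)) c / 2)) =
        (\<Sum>y\<in>UNIV. \<Sum>x\<in>UNIV. \<psi> (Qf C (Suc (Suc 0)) (((\<lambda>_. undefined)(0 := y))(Suc 0 := x)) / 2))"
      unfolding sum_split_Kn by (simp add: fun_upd_def)
    also have "\<dots> = (\<Sum>y\<in>UNIV. \<Sum>x\<in>UNIV. \<psi> (y * x) * \<psi> (x * x / 2))"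
      unfolding q using two by (simp add: add_divide_distrib hom)
    also have "\<dots> = (\<Sum>x\<in>UNIV. (\<Sum>y\<in>UNIV. \<psi> (y * x)) * \<psi> (x * x / 2))"
      by (subst sum.swap) (simp add: sum_distrib_right)
    also have "\<dots> = (\<Sum>x\<in>UNIV. if (x::'k) = 0 then of_nat (card (UNIV::'k set)) else 0)"
      unfolding sum_prod_zero by (rule sum.cong) (auto simp: psi0)
    also have "\<dots> = of_nat (card (UNIV::'k set))" by simp
    finally show ?thesis .
  qed
  ultimately have "gauss_G1 \<psi> ^ 2 * legendre_char (-1::'k) = of_nat (card (UNIV::'k set))"
    by (simp add: numeral_2_eq_2)
  then have "gauss_G1 \<psi> ^ 2 * (legendre_char (-1::'k) * legendre_char (-1::'k)) = legendre_char (-1::'k) * of_nat (card (UNIV::'k set))"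
    by (metis mult.assoc mult.commute)
  then show ?thesis using leg_square1[of "-1::'k"] by simp
qed

end

locale weil = fchar \<psi> + vs: vector_space scale
  for \<psi> :: "'k::{field,finite} \<Rightarrow> complex" and scale :: "'k \<Rightarrow> 'v::ab_group_add \<Rightarrow> 'v" +
  fixes \<omega> :: "'v \<Rightarrow> 'v \<Rightarrow> 'k" and n :: nat and N M L :: "'v set" and oN oM oL :: "'v list"
  assumes fin: "finite (UNIV :: 'v set)"
    and dimV: "vs.dim (UNIV :: 'v set) = 2 * n"
    and sympl: "symplectic_form scale \<omega>"
    and olN: "oriented_lagrangian scale \<omega> N oN"
    and olM: "oriented_lagrangian scale \<omega> M oM"
    and olL: "oriented_lagrangian scale \<omega> L oL"
    and gNM: "general_position N M"
    and gML: "general_position M L"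
    and gNL: "general_position N L"
begin

lemma om_addl: "\<omega> (x + y) z = \<omega> x z + \<omega> y z" using sympl unfolding symplectic_form_def by blast
lemma om_addr: "\<omega> x (y + z) = \<omega> x y + \<omega> x z" using sympl unfolding symplectic_form_def by blast
lemma om_scl: "\<omega> (scale c x) y = c * \<omega> x y" using sympl unfolding symplectic_form_def by blast
lemma om_scr: "\<omega> x (scale c y) = c * \<omega> x y" using sympl unfolding symplectic_form_def by blast
lemma om_self: "\<omega> x x = 0" using sympl unfolding symplectic_form_def by blast
lemma om_nondeg: "(\<And>y. \<omega> x y = 0) \<Longrightarrow> x = 0" using sympl unfolding symplectic_form_def by blast

lemma om_0l[simp]: "\<omega> 0 y = 0"
proof -
  have "\<omega> 0 y + \<omega> 0 y = \<omega> 0 y + 0" using om_addl[of 0 0 y] by simp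
  then show ?thesis by (simp only: add_left_cancel)
qed
lemma om_0r[simp]: "\<omega> x 0 = 0"
proof -
  have "\<omega> x 0 + \<omega> x 0 = \<omega> x 0 + 0" using om_addr[of x 0 0] by simp
  then show ?thesis by (simp only: add_left_cancel)
qed
lemma om_negl: "\<omega> (- x) y = - \<omega> x y"
proof -
  have "\<omega> x y + \<omega> (- x) y = 0" using om_addl[of x "-x" y] by simp
  then show ?thesis by (simp add: eq_neg_iff_add_eq_0 add.commute)
qed
lemma om_negr: "\<omega> x (- y) = - \<omega> x y"
proof -
  have "\<omega> x y + \<omega> x (- y) = 0" using om_addr[of x y "-y"] by simp
  then show ?thesis by (simp add: eq_neg_iff_add_eq_0 add.commute)
qed
lemma om_diffl: "\<omega> (x - y) z = \<omega> x z - \<omega> y z" using om_addl[of x "-y" z] om_negl by simp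
lemma om_diffr: "\<omega> x (y - z) = \<omega> x y - \<omega> x z" using om_addr[of x y "-z"] om_negr by simp
lemma om_antisym: "\<omega> y x = - \<omega> x y"
  using om_self[of "x + y"] om_self[of x] om_self[of y] by (simp add: om_addl om_addr eq_neg_iff_add_eq_0)
lemma om_suml: "\<omega> (\<Sum>i\<in>A. g i) y = (\<Sum>i\<in>A. \<omega> (g i) y)"
  by (induct A rule: infinite_finite_induct) (auto simp: om_addl)
lemma om_sumr: "\<omega> x (\<Sum>i\<in>A. g i) = (\<Sum>i\<in>A. \<omega> x (g i))"
  by (induct A rule: infinite_finite_induct) (auto simp: om_addr)

definition lc :: "'v list \<Rightarrow> (nat \<Rightarrow> 'k) \<Rightarrow> 'v" where
  "lc xs c = (\<Sum>i<length xs. scale (c i) (xs ! i))"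

lemma om_lcl: "\<omega> (lc xs c) y = (\<Sum>i<length xs. c i * \<omega> (xs ! i) y)"
  unfolding lc_def om_suml by (simp add: om_scl)
lemma om_lcr: "\<omega> y (lc xs c) = (\<Sum>i<length xs. c i * \<omega> y (xs ! i))"
  unfolding lc_def om_sumr by (simp add: om_scr)

lemma lc_in_span: "lc xs c \<in> vs.span (set xs)"
  unfolding lc_def by (intro vs.span_sum vs.span_scale vs.span_base) auto

lemma span_lc: assumes "distinct xs" "x \<in> vs.span (set xs)" shows "\<exists>c. x = lc xs c"
proof -
  obtain u where u: "x = (\<Sum>v\<in>set xs. scale (u v) v)"
    using assms(2) vs.span_finite[of "set xs"] by auto
  have "(\<Sum>v\<in>set xs. scale (u v) v) = (\<Sum>i<length xs. scale (u (xs ! i)) (xs ! i))"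
    using sum.reindex_bij_betw[OF bij_betw_nth[OF assms(1) refl refl], of "\<lambda>v. scale (u v) v"]
    by simp
  then show ?thesis using u unfolding lc_def by (intro exI[of _ "\<lambda>i. u (xs ! i)"]) simp
qed

lemma lc_zero:
  assumes ind: "vs.independent (set xs)" and d: "distinct xs" and z: "lc xs c = 0" and i: "i < length xs"
  shows "c i = 0"
proof -
  define idx where "idx = inv_into {..<length xs} ((!) xs)"
  have bij: "bij_betw ((!) xs) {..<length xs} (set xs)" by (rule bij_betw_nth[OF d refl refl])
  have ii: "idx (xs ! j) = j" if "j < length xs" for j
    unfolding idx_def using bij that by (simp add: bij_betw_def inv_into_f_f)
  have "(\<Sum>v\<in>set xs. scale (c (idx v)) v) = (\<Sum>j<length xs. scale (c (idx (xs ! j))) (xs ! j))"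
    using sum.reindex_bij_betw[OF bij, of "\<lambda>v. scale (c (idx v)) v"] by simp
  also have "\<dots> = lc xs c" unfolding lc_def by (intro sum.cong refl) (simp add: ii)
  finally have "(\<Sum>v\<in>set xs. scale (c (idx v)) v) = 0" using z by simp
  then have "c (idx (xs ! i)) = 0"
    using vs.independentD[OF ind, of "set xs" "\<lambda>v. c (idx v)" "xs ! i"] i by simp
  then show ?thesis using ii[OF i] by simp
qed

lemma lc_diff: "lc xs (\<lambda>i. c i - d i) = lc xs c - lc xs d"
  unfolding lc_def by (simp add: vs.scale_left_diff_distrib sum_subtractf)

lemma lc_add: "lc xs (\<lambda>i. c i + d i) = lc xs c + lc xs d"
  unfolding lc_def by (simp add: vs.scale_left_distrib sum.distrib)

lemma ol_len:
  assumes "oriented_lagrangian scale \<omega> X xs" shows "length xs = n"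
proof -
  have lag: "2 * vs.dim X = 2 * n" using assms dimV unfolding oriented_lagrangian_def lagrangian_def by simp
  have "vs.dim X = card (set xs)"
    using assms vs.dim_span_eq_card_independent unfolding oriented_lagrangian_def by metis
  then show ?thesis using lag assms distinct_card unfolding oriented_lagrangian_def by fastforce
qed

lemma ol_sub: "oriented_lagrangian scale \<omega> X xs \<Longrightarrow> vs.subspace X"
  unfolding oriented_lagrangian_def lagrangian_def by blast
lemma ol_iso: "oriented_lagrangian scale \<omega> X xs \<Longrightarrow> x \<in> X \<Longrightarrow> y \<in> X \<Longrightarrow> \<omega> x y = 0"
  unfolding oriented_lagrangian_def lagrangian_def by blast
lemma ol_mem: "oriented_lagrangian scale \<omega> X xs \<Longrightarrow> i < length xs \<Longrightarrow> xs ! i \<in> X"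
  unfolding oriented_lagrangian_def using vs.span_base by (metis nth_mem)
lemma ol_lc: "oriented_lagrangian scale \<omega> X xs \<Longrightarrow> lc xs c \<in> X"
  unfolding oriented_lagrangian_def using lc_in_span by blast
lemma ol_span: "oriented_lagrangian scale \<omega> X xs \<Longrightarrow> x \<in> X \<Longrightarrow> \<exists>c. x = lc xs c"
  unfolding oriented_lagrangian_def using span_lc by blast

lemma sum_lc_bij:
  assumes ol: "oriented_lagrangian scale \<omega> X xs"
  shows "(\<Sum>m\<in>X. G m) = (\<Sum>c\<in>Kn n. (G (lc xs c) :: complex))"
proof -
  have len: "length xs = n" using ol_len[OF ol] .
  have "bij_betw (lc xs) (Kn n) X"
  proof (rule bij_betwI')
    fix c d :: "nat \<Rightarrow> 'k" assume c: "c \<in> Kn n" and d: "d \<in> Kn n"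
    show "(lc xs c = lc xs d) = (c = d)"
    proof
      assume e: "lc xs c = lc xs d"
      then have "lc xs (\<lambda>i. c i - d i) = 0" by (simp add: lc_diff)
      then have "c i - d i = 0" if "i < n" for i
        using lc_zero[of xs "\<lambda>i. c i - d i" i] ol that len unfolding oriented_lagrangian_def by auto
      then show "c = d" using c d by (intro PiE_ext) auto
    qed simp
  next
    fix c :: "nat \<Rightarrow> 'k" assume "c \<in> Kn n" then show "lc xs c \<in> X" using ol_lc[OF ol] by simp
  next
    fix x assume "x \<in> X"
    then obtain d where d: "x = lc xs d" using ol_span[OF ol] by blast
    have "lc xs (restrict d {..<n}) = lc xs d" unfolding lc_def len by (intro sum.cong refl) auto
    then show "\<exists>c\<in>(Kn n :: (nat \<Rightarrow> 'k) set). x = lc xs c" using d by (intro bexI[of _ "restrict d {..<n}"]) auto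
  qed
  then show ?thesis using sum.reindex_bij_betw[of "lc xs" "Kn n" X G] by simp
qed

end

context weil begin

lemma det_nz:
  assumes olX: "oriented_lagrangian scale \<omega> X xs" and olY: "oriented_lagrangian scale \<omega> Y ys"
    and g: "general_position X Y"
  shows "det_fun (\<lambda>i j. \<omega> (ys ! i) (xs ! j)) n \<noteq> 0"
proof
  assume d0: "det_fun (\<lambda>i j. \<omega> (ys ! i) (xs ! j)) n = 0"
  have lx: "length xs = n" and ly: "length ys = n" using ol_len olX olY by auto
  let ?W = "mat n n (\<lambda>(i,j). \<omega> (ys ! i) (xs ! j))"
  have "det (transpose_mat ?W) = 0" using d0 det_transpose[of ?W n] by (simp add: det_fun_det)
  then obtain v where v: "v \<in> carrier_vec n" "v \<noteq> 0\<^sub>v n" "transpose_mat ?W *\<^sub>v v = 0\<^sub>v n"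
    using det_0_iff_vec_prod_zero_field[of "transpose_mat ?W" n] by auto
  define y where "y = lc ys (\<lambda>i. v $ i)"
  have yY: "y \<in> Y" unfolding y_def by (rule ol_lc[OF olY])
  have yx: "\<omega> y (xs ! j) = 0" if j: "j < n" for j
  proof -
    have "(transpose_mat ?W *\<^sub>v v) $ j = (\<Sum>i<n. \<omega> (ys ! i) (xs ! j) * v $ i)"
      using j v(1) by (simp add: scalar_prod_def atLeast0LessThan)
    also have "\<dots> = \<omega> y (xs ! j)" unfolding y_def om_lcl ly by (simp add: mult.commute)
    finally show ?thesis using v(3) j by simp
  qed
  have "\<omega> y u = 0" for u
  proof -
    obtain x y' where x: "x \<in> X" and y': "y' \<in> Y" and u: "u = x + y'" using g unfolding general_position_def by blast
    obtain d where d: "x = lc xs d" using ol_span[OF olX x] by blast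
    have "\<omega> y x = 0" unfolding d om_lcr lx using yx by simp
    moreover have "\<omega> y y' = 0" using ol_iso[OF olY yY y'] .
    ultimately show ?thesis unfolding u om_addr by simp
  qed
  then have "y = 0" by (rule om_nondeg)
  then have "v $ i = 0" if "i < n" for i
    using lc_zero[of ys "\<lambda>i. v $ i" i] olY that ly unfolding y_def oriented_lagrangian_def by auto
  then have "v = 0\<^sub>v n" using v(1) by (intro eq_vecI) auto
  then show False using v(2) by simp
qed

lemma heis_key:
  assumes a: "a \<in> N" and b: "b \<in> L" and y: "y \<in> N"
  shows "heis_mult \<omega> (a + b, 0) (heis_mult \<omega> (y - a, 0) h) =
         heis_mult \<omega> (heis_mult \<omega> (0, \<omega> a b / 2) (b, 0)) (heis_mult \<omega> (y, 0) h)"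
proof -
  obtain hv hz where h: "h = (hv, hz)" by (cases h)
  have ay: "\<omega> a y = 0" using ol_iso[OF olN a y] .
  have ba: "\<omega> b a = - \<omega> a b" by (rule om_antisym)
  have "hz + \<omega> (y - a) hv / 2 + \<omega> (a + b) (y - a + hv) / 2 =
        \<omega> a b / 2 + (hz + \<omega> y hv / 2) + \<omega> b (y + hv) / 2"
    using two by (simp add: om_addl om_addr om_diffl om_diffr ay ba om_self field_simps)
  then show ?thesis unfolding h heis_mult_def by (simp add: algebra_simps)
qed

lemma part1:
  assumes f: "f \<in> heis_space \<omega> \<psi> L" and a: "a \<in> N" and b: "b \<in> L"
  shows "(\<Sum>x\<in>N. f (heis_mult \<omega> (a + b, 0) (heis_mult \<omega> (x, 0) h))) =
         \<psi> (\<omega> a b / 2) * (\<Sum>y\<in>N. f (heis_mult \<omega> (y, 0) h))"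
proof -
  have sN: "vs.subspace N" using ol_sub[OF olN] .
  have "(\<Sum>x\<in>N. f (heis_mult \<omega> (a + b, 0) (heis_mult \<omega> (x, 0) h))) =
        (\<Sum>y\<in>N. f (heis_mult \<omega> (a + b, 0) (heis_mult \<omega> (y - a, 0) h)))"
    by (rule sum.reindex_bij_witness[where i="\<lambda>y. y - a" and j="\<lambda>x. x + a"])
       (use sN a in \<open>auto intro: vs.subspace_add vs.subspace_diff\<close>)
  also have "\<dots> = (\<Sum>y\<in>N. \<psi> (\<omega> a b / 2) * f (heis_mult \<omega> (y, 0) h))"
  proof (rule sum.cong[OF refl])
    fix y assume y: "y \<in> N"
    show "f (heis_mult \<omega> (a + b, 0) (heis_mult \<omega> (y - a, 0) h)) = \<psi> (\<omega> a b / 2) * f (heis_mult \<omega> (y, 0) h)"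
      unfolding heis_key[OF a b y] using f b unfolding heis_space_def by blast
  qed
  finally show ?thesis by (simp add: sum_distrib_left)
qed

end

lemma (in fchar) leg_pow: "legendre_char ((-1::'k) ^ m) = legendre_char (-1::'k) ^ m"
proof (induction m)
  case 0 then show ?case by (auto simp: leg_def sq_def intro: exI[of _ 1])
next
  case (Suc m) show ?case by (simp only: power_Suc leg_mult Suc.IH)
qed

context weil begin

lemma A_simp:
  assumes "length oY = n"
  shows "A_const \<omega> \<psi> n oX oY = (gauss_G1 \<psi> / of_nat (card (UNIV::'k set))) ^ n *
           legendre_char (det_fun (\<lambda>i j. \<omega> (oY ! i) (oX ! j)) n)"
proof -
  have "(-1::'k) ^ (n * (n - 1) div 2) * (-1) ^ (n * (n - 1) div 2) = 1"
    by (simp add: power_mult_distrib[symmetric])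
  then show ?thesis unfolding A_const_def omega_wedge_def assms
    by (simp add: mult.assoc[symmetric])
qed

theorem main:
  assumes f: "f \<in> heis_space \<omega> \<psi> L"
  shows "T_op \<omega> \<psi> n N oN L oL f = T_op \<omega> \<psi> n N oN M oM (T_op \<omega> \<psi> n M oM L oL f)"
proof -
  have lN: "length oN = n" and lM: "length oM = n" and lL: "length oL = n"
    using ol_len olN olM olL by auto
  have sN: "vs.subspace N" and sL: "vs.subspace L" using ol_sub olN olL by auto
  have "\<forall>j. \<exists>a. a \<in> N \<and> oM ! j - a \<in> L"
  proof
    fix j
    obtain a l where "a \<in> N" "l \<in> L" "oM ! j = a + l" using gNL unfolding general_position_def by blast
    then show "\<exists>a. a \<in> N \<and> oM ! j - a \<in> L" by (intro exI[of _ a]) simp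
  qed
  then obtain \<alpha> where \<alpha>: "\<And>j. \<alpha> j \<in> N" "\<And>j. oM ! j - \<alpha> j \<in> L" by metis
  define \<beta> where "\<beta> j = oM ! j - \<alpha> j" for j
  have \<beta>L: "\<beta> j \<in> L" for j using \<alpha>(2) \<beta>_def by simp
  have oMab: "oM ! j = \<alpha> j + \<beta> j" for j unfolding \<beta>_def by simp
  have "\<forall>j. \<exists>c. \<alpha> j = lc oN c" using ol_span[OF olN \<alpha>(1)] by blast
  then obtain P' where P': "\<And>j. \<alpha> j = lc oN (P' j)" by metis
  define P where "P k j = P' j k" for k j
  define Cm where "Cm i j = \<omega> (\<alpha> i) (\<beta> j)" for i j
  define Dnl where "Dnl i j = \<omega> (oL ! i) (oN ! j)" for i j
  define Dnm where "Dnm i j = \<omega> (oM ! i) (oN ! j)" for i j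
  define Dml where "Dml i j = \<omega> (oL ! i) (oM ! j)" for i j
  define q :: complex where "q = of_nat (card (UNIV::'k set))"
  define G where "G = gauss_G1 \<psi>"
  define s where "s = legendre_char (-1::'k)"
  have Csym: "\<forall>i<n. \<forall>j<n. Cm i j = Cm j i"
  proof (intro allI impI)
    fix i j assume i: "i < n" and j: "j < n"
    have "0 = \<omega> (oM ! i) (oM ! j)" using ol_iso[OF olM ol_mem[OF olM] ol_mem[OF olM]] i j lM by simp
    also have "\<dots> = \<omega> (\<alpha> i) (\<beta> j) + \<omega> (\<beta> i) (\<alpha> j)"
      unfolding oMab om_addl om_addr using ol_iso[OF olN \<alpha>(1) \<alpha>(1)] ol_iso[OF olL \<beta>L \<beta>L] by simp
    finally have e1: "\<omega> (\<alpha> i) (\<beta> j) + \<omega> (\<beta> i) (\<alpha> j) = 0" by simp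
    have e2: "\<omega> (\<alpha> j) (\<beta> i) + \<omega> (\<beta> i) (\<alpha> j) = 0" using om_antisym[of "\<alpha> j" "\<beta> i"] by simp
    from e1 e2 show "Cm i j = Cm j i" unfolding Cm_def by (metis add_right_cancel)
  qed
  have eML: "mat n n (\<lambda>(i,j). Dml i j) = mat n n (\<lambda>(i,j). Dnl i j) * mat n n (\<lambda>(i,j). P i j)"
  proof (rule eq_matI)
    fix i j assume "i < dim_row (mat n n (\<lambda>(i,j). Dnl i j) * mat n n (\<lambda>(i,j). P i j))"
      "j < dim_col (mat n n (\<lambda>(i,j). Dnl i j) * mat n n (\<lambda>(i,j). P i j))"
    then have i: "i < n" and j: "j < n" by auto
    have "Dml i j = \<omega> (oL ! i) (\<alpha> j)"
      unfolding Dml_def oMab om_addr using ol_iso[OF olL ol_mem[OF olL] \<beta>L] i lL by simp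
    also have "\<dots> = (\<Sum>k<n. Dnl i k * P k j)"
      unfolding P' om_lcr lN Dnl_def P_def by (simp add: mult.commute)
    finally show "mat n n (\<lambda>(i,j). Dml i j) $$ (i,j) = (mat n n (\<lambda>(i,j). Dnl i j) * mat n n (\<lambda>(i,j). P i j)) $$ (i,j)"
      using mult_entry[OF i j, of Dnl P] i j by simp
  qed auto
  have eC: "mat n n (\<lambda>(i,j). Cm i j) = mat n n (\<lambda>(i,j). P j i) * mat n n (\<lambda>(i,j). - Dnm j i)"
  proof (rule eq_matI)
    fix i j assume "i < dim_row (mat n n (\<lambda>(i,j). P j i) * mat n n (\<lambda>(i,j). - Dnm j i))"
      "j < dim_col (mat n n (\<lambda>(i,j). P j i) * mat n n (\<lambda>(i,j). - Dnm j i))"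
    then have i: "i < n" and j: "j < n" by auto
    have nm: "\<omega> (oN ! k) (\<beta> j) = - Dnm j k" if k: "k < n" for k
    proof -
      have "\<omega> (\<alpha> j) (oN ! k) = 0" using ol_iso[OF olN \<alpha>(1) ol_mem[OF olN]] k lN by simp
      then show ?thesis unfolding Dnm_def oMab om_addl using om_antisym[of "\<beta> j" "oN ! k"] by simp
    qed
    have "Cm i j = (\<Sum>k<n. P' i k * \<omega> (oN ! k) (\<beta> j))"
      unfolding Cm_def P' om_lcl lN ..
    also have "\<dots> = (\<Sum>k<n. P k i * - Dnm j k)"
      unfolding P_def using nm by (intro sum.cong refl) auto
    finally show "mat n n (\<lambda>(i,j). Cm i j) $$ (i,j) = (mat n n (\<lambda>(i,j). P j i) * mat n n (\<lambda>(i,j). - Dnm j i)) $$ (i,j)"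
      using mult_entry[OF i j, of "\<lambda>i k. P k i" "\<lambda>k j. - Dnm j k"] i j by simp
  qed auto
  define p where "p = det_fun P n"
  have dML: "det_fun Dml n = det_fun Dnl n * p"
    unfolding det_fun_det p_def eML by (rule det_mult) auto
  have dPt: "det (mat n n (\<lambda>(i,j). P j i)) = p"
  proof -
    have "mat n n (\<lambda>(i,j). P j i) = transpose_mat (mat n n (\<lambda>(i,j). P i j))" by (rule eq_matI) auto
    then show ?thesis unfolding p_def det_fun_det using det_transpose[of "mat n n (\<lambda>(i,j). P i j)" n] by simp
  qed
  have dW: "det (mat n n (\<lambda>(i,j). - Dnm j i)) = (-1) ^ n * det_fun Dnm n"
  proof -
    have "mat n n (\<lambda>(i,j). - Dnm j i) = (-1) \<cdot>\<^sub>m transpose_mat (mat n n (\<lambda>(i,j). Dnm i j))" by (rule eq_matI) auto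
    then show ?thesis unfolding det_fun_det using det_transpose[of "mat n n (\<lambda>(i,j). Dnm i j)" n] by simp
  qed
  have dC: "det_fun Cm n = p * ((-1) ^ n * det_fun Dnm n)"
  proof -
    have "det_fun Cm n = det (mat n n (\<lambda>(i,j). P j i)) * det (mat n n (\<lambda>(i,j). - Dnm j i))"
      unfolding det_fun_det eC by (rule det_mult) auto
    then show ?thesis using dPt dW by simp
  qed
  have nNM: "det_fun Dnm n \<noteq> 0" unfolding Dnm_def by (rule det_nz[OF olN olM gNM])
  have nML: "det_fun Dml n \<noteq> 0" unfolding Dml_def by (rule det_nz[OF olM olL gML])
  have p0: "p \<noteq> 0" using nML dML by auto
  have nC: "det_fun Cm n \<noteq> 0" using dC p0 nNM by simp
  have S: "(\<Sum>c\<in>Kn n. \<psi> (Qf Cm n c / 2)) = G ^ n * legendre_char (det_fun Cm n)"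
    unfolding G_def by (rule gauss_multi[OF Csym nC])
  have AML: "A_const \<omega> \<psi> n oM oL = (G / q) ^ n * legendre_char (det_fun Dml n)"
    unfolding A_simp[OF lL] G_def q_def Dml_def ..
  have ANM: "A_const \<omega> \<psi> n oN oM = (G / q) ^ n * legendre_char (det_fun Dnm n)"
    unfolding A_simp[OF lM] G_def q_def Dnm_def ..
  have ANL: "A_const \<omega> \<psi> n oN oL = (G / q) ^ n * legendre_char (det_fun Dnl n)"
    unfolding A_simp[OF lL] G_def q_def Dnl_def ..
  have q0: "q \<noteq> 0" unfolding q_def by simp
  have s2: "s * s = 1" unfolding s_def by (rule leg_square1) simp
  have gG: "(G / q) ^ n * G ^ n = s ^ n"
  proof -
    have "(G / q) ^ n * G ^ n = (G ^ 2 / q) ^ n" by (simp add: power_mult_distrib[symmetric] power2_eq_square)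
    also have "G ^ 2 = s * q" unfolding G_def s_def q_def by (rule gauss_sq)
    finally show ?thesis using q0 by simp
  qed
  have const: "A_const \<omega> \<psi> n oN oL = A_const \<omega> \<psi> n oN oM * A_const \<omega> \<psi> n oM oL * (G ^ n * legendre_char (det_fun Cm n))"
  proof -
    have sD: "legendre_char (det_fun Dnm n) * legendre_char (det_fun Dnm n) = 1" by (rule leg_square1[OF nNM])
    have sp: "legendre_char p * legendre_char p = 1" by (rule leg_square1[OF p0])
    have ss: "s ^ n * s ^ n = 1" using s2 by (simp add: power_mult_distrib[symmetric])
    have "A_const \<omega> \<psi> n oN oM * A_const \<omega> \<psi> n oM oL * (G ^ n * legendre_char (det_fun Cm n)) =
       (G / q) ^ n * legendre_char (det_fun Dnl n) * ((G / q) ^ n * G ^ n) *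
       (legendre_char (det_fun Dnm n) * legendre_char (det_fun Dnm n)) * (legendre_char p * legendre_char p) * s ^ n"
      unfolding ANM AML dML dC leg_mult leg_pow s_def by (simp add: algebra_simps)
    also have "\<dots> = (G / q) ^ n * legendre_char (det_fun Dnl n)"
      unfolding gG sD sp using ss by (simp add: algebra_simps)
    finally show ?thesis using ANL by simp
  qed
  show ?thesis
  proof (rule ext)
    fix h
    let ?F = "(\<Sum>y\<in>N. f (heis_mult \<omega> (y, 0) h))"
    have decomp: "(\<Sum>x\<in>N. f (heis_mult \<omega> (lc oM c, 0) (heis_mult \<omega> (x, 0) h))) = \<psi> (Qf Cm n c / 2) * ?F" for c
    proof -
      define a where "a = (\<Sum>i<n. scale (c i) (\<alpha> i))"
      define b where "b = (\<Sum>i<n. scale (c i) (\<beta> i))"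
      have aN: "a \<in> N" unfolding a_def using sN \<alpha>(1) by (intro vs.subspace_sum vs.subspace_scale) auto
      have bL: "b \<in> L" unfolding b_def using sL \<beta>L by (intro vs.subspace_sum vs.subspace_scale) auto
      have m: "lc oM c = a + b" unfolding lc_def lM a_def b_def oMab
        by (simp add: vs.scale_right_distrib sum.distrib)
      have "\<omega> a b = (\<Sum>i<n. c i * (\<Sum>j<n. c j * \<omega> (\<alpha> i) (\<beta> j)))"
        unfolding a_def b_def by (simp only: om_suml om_scl) (simp only: om_sumr om_scr)
      also have "\<dots> = Qf Cm n c"
        unfolding Qf_def Cm_def by (simp add: sum_distrib_left algebra_simps)
      finally have "\<omega> a b = Qf Cm n c" .
      then show ?thesis unfolding m using part1[OF f aN bL, of h] by simp
    qed
    have "T_op \<omega> \<psi> n N oN M oM (T_op \<omega> \<psi> n M oM L oL f) h =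
        A_const \<omega> \<psi> n oN oM * (\<Sum>x\<in>N. A_const \<omega> \<psi> n oM oL * (\<Sum>m\<in>M. f (heis_mult \<omega> (m, 0) (heis_mult \<omega> (x, 0) h))))"
      unfolding T_op_def F_op_def ..
    also have "\<dots> = A_const \<omega> \<psi> n oN oM * A_const \<omega> \<psi> n oM oL * (\<Sum>m\<in>M. \<Sum>x\<in>N. f (heis_mult \<omega> (m, 0) (heis_mult \<omega> (x, 0) h)))"
      by (simp add: sum_distrib_left[symmetric] sum.swap[of _ N M] mult.assoc)
    also have "(\<Sum>m\<in>M. \<Sum>x\<in>N. f (heis_mult \<omega> (m, 0) (heis_mult \<omega> (x, 0) h))) =
        (\<Sum>c\<in>Kn n. \<Sum>x\<in>N. f (heis_mult \<omega> (lc oM c, 0) (heis_mult \<omega> (x, 0) h)))"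
      by (rule sum_lc_bij[OF olM])
    also have "\<dots> = (\<Sum>c\<in>Kn n. \<psi> (Qf Cm n c / 2)) * ?F"
      unfolding decomp by (simp add: sum_distrib_right)
    also have "A_const \<omega> \<psi> n oN oM * A_const \<omega> \<psi> n oM oL * (\<dots>) = A_const \<omega> \<psi> n oN oL * ?F"
      unfolding S const by (simp add: algebra_simps)
    also have "\<dots> = T_op \<omega> \<psi> n N oN L oL f h" unfolding T_op_def F_op_def ..
    finally show "T_op \<omega> \<psi> n N oN L oL f h = T_op \<omega> \<psi> n N oN M oM (T_op \<omega> \<psi> n M oM L oL f) h" by simp
  qed
qed

end

theorem mainTheorem1:
  fixes scale :: "'k::{field,finite} \<Rightarrow> 'v::ab_group_add \<Rightarrow> 'v"
    and \<omega> :: "'v \<Rightarrow> 'v \<Rightarrow> 'k"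
    and \<psi> :: "'k \<Rightarrow> complex"
    and n :: nat
    and N M L :: "'v set"
    and oN oM oL :: "'v list"
    and f :: "'v \<times> 'k \<Rightarrow> complex"
  assumes char_odd: "(2::'k) \<noteq> 0"
    and vs: "vector_space scale"
    and fin: "finite (UNIV :: 'v set)"
    and dimV: "vector_space.dim scale (UNIV :: 'v set) = 2 * n"
    and sympl: "symplectic_form scale \<omega>"
    and psi_hom: "\<forall>a b. \<psi> (a + b) = \<psi> a * \<psi> b"
    and psi_nz: "\<forall>a. \<psi> a \<noteq> 0"
    and psi_nontriv: "\<exists>a. \<psi> a \<noteq> 1"
    and olN: "oriented_lagrangian scale \<omega> N oN"
    and olM: "oriented_lagrangian scale \<omega> M oM"
    and olL: "oriented_lagrangian scale \<omega> L oL"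
    and gNM: "general_position N M"
    and gML: "general_position M L"
    and gNL: "general_position N L"
    and f_in: "f \<in> heis_space \<omega> \<psi> L"
  shows "T_op \<omega> \<psi> n N oN L oL f = T_op \<omega> \<psi> n N oN M oM (T_op \<omega> \<psi> n M oM L oL f)"
  proof -
  have fc: "fchar \<psi>"
    by (rule fchar.intro) (use char_odd psi_hom psi_nz psi_nontriv in auto)
  have wa: "weil_axioms scale \<omega> n N M L oN oM oL"
    by (rule weil_axioms.intro) (use fin dimV sympl olN olM olL gNM gML gNL in auto)
  interpret weil \<psi> scale \<omega> n N M L oN oM oL
    by (rule weil.intro[OF fc vs wa])
  show ?thesis by (rule main[OF f_in])
qed

end
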